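(* In any execution of $\mathtt{search}(\mathcal{G},T)$ (defined in the context), let $\mathcal{G}'$ be the current subgame with top priority $p$, $\alpha\equiv p\pmod 2$, and let $(Z,\sigma)=\mathit{TAttr}^{\mathcal{G}',T'}_\alpha(\mathrm{pr}^{-1}(p)\cap V')$ be the computed region and strategy. Then every play in $\mathcal{G}'$ that is consistent with $\sigma$ and stays in $Z$ forever is won by player $\alpha$.
   Context: Parity games: $\mathcal{G}=(V_0,V_1,E,\mathrm{pr})$, $V=V_0\cup V_1$ finite, partitioned into vertices of Even ($0$) and Odd ($1$); $E\subseteq V\times V$ with every vertex having a successor; $\mathrm{pr}:V\to\{0,\dots,d\}$. $E(u)=\{v:(u,v)\in E\}$, $\mathrm{pr}(U)=\max_{u\in U}\mathrm{pr}(u)$, $\mathrm{pr}^{-1}(p)$ the set of vertices of priority $p$, $\overline{\alpha}=1-\alpha$. A play (infinite path) is won by Even iff the highest priority occurring infinitely often is even; a cycle is won by $\alpha$ if its highest priority has parity $\alpha$. A strategy of $\alpha$ is a partial function $\sigma$ on $V_\alpha$ with $\sigma(v)\in E(v)$; a play is consistent with $\sigma$ if every vertex $v\in\mathrm{dom}(\sigma)$ on it is followed by $\sigma(v)$. For $U\subseteq V$, $\mathcal{G}\cap U$ is the subgame with vertices $V\cap U$ and edges $E\cap(U\times U)$, and $\mathcal{G}\setminus U=\mathcal{G}\cap(V\setminus U)$. A $p$-tangle is a nonempty $U\subseteq V$ with $p=\mathrm{pr}(U)$ such that for $\alpha\equiv p\pmod 2$ there is a strategy $\sigma:U\cap V_\alpha\to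 U$ (witness strategy $\sigma_T(U)$) with $(U,E\cap(\sigma\cup((U\cap V_{\overline{\alpha}})\times U)))$ strongly connected and all its cycles won by $\alpha$ ("won by $\alpha$"). For a tangle $t$ won by $\alpha$ in a game with edge set $E$, $E_T(t)=\{v\notin t:\exists u\in t\cap V_{\overline{\alpha}},(u,v)\in E\}$. $T_\alpha$ denotes the tangles of $T$ won by $\alpha$; for a subgame $\mathcal{G}'$, $T\cap\mathcal{G}'$ denotes the tangles of $T$ contained in its vertex set. Tangle attractor: for a game $\mathcal{G}$ with vertices $V$, tangles $T$, player $\alpha$ and $A\subseteq V$, $\mathit{TAttr}^{\mathcal{G},T}_\alpha(A)$ is the least $Z\supseteq A$ containing every $v\in V_\alpha$ with $E(v)\cap Z\neq\emptyset$, every $v\in V_{\overline{\alpha}}$ with $E(v)\subseteq Z$, and every vertex of every $t\in T_\alpha$ with $\emptyset\neq E_T(t)\subseteq Z$ ($E_T$ computed in $\mathcal{G}$). It is computed iteratively together with a strategy $\sigma$ of $\alpha$ (initially empty): when an $\alpha$-vertex is added individually, $\sigma$ maps it to a successor already in $Z$; each $\alpha$-vertex of $A$ gets as $\sigma$-value a successor in $Z$ once one exists; when the vertices of a tangle $t$ are added, $\sigma(u):=\sigma_T(t)(u)$ for every $\alpha$-vertex $u\in t$ not yet in $\mathrm{dom}(\sigma)$. extract-tangles$(Z,\sigma)$, for a subgame $\mathcal{G}'=(V',E')$ with top priority $p$, $\alpha\equiv p$, region $Z\subseteq V'$ and strategy $\sigma$: let $Y$ be the greatest $X\subseteq Z$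 such that every $v\in X\cap V_{\overline{\alpha}}$ has $E'(v)\subseteq X$ and every $v\in X\cap V_\alpha$ has $\sigma(v)\in X$; let $H$ be the graph on $Y$ with edges $(v,\sigma(v))$ for $v\in Y\cap V_\alpha$ and $(v,w)\in E'$ for $v\in Y\cap V_{\overline{\alpha}}$; return all bottom strongly connected components of $H$ that contain at least one edge of $H$, each with witness strategy $\sigma$ restricted to it. $\mathtt{search}(\mathcal{G},T)$ (with $T$ a set of tangles of $\mathcal{G}$): repeat forever: set $r:=\emptyset$ (a partial function $V\to\mathbb{N}$, the region function) and $Y:=\emptyset$; while $V\setminus\mathrm{dom}(r)\neq\emptyset$: let $\mathcal{G}':=\mathcal{G}\setminus\mathrm{dom}(r)$ with vertex set $V'$, $T':=T\cap\mathcal{G}'$, $p:=\mathrm{pr}(\mathcal{G}')$, $\alpha:=p\bmod 2$; compute $(Z,\sigma):=\mathit{TAttr}^{\mathcal{G}',T'}_\alpha(\mathrm{pr}^{-1}(p)\cap V')$ (the region of priority $p$); let $A:=$ extract-tangles$(Z,\sigma)$; if some $t\in A$ has $E_T(t)=\emptyset$ with $E_T$ computed in the full game $\mathcal{G}$, return $(T\cup Y,t)$; otherwise set $r(v):=p$ for all $v\in Z$ and $Y:=Y\cup A$. After the while-loop, set $T:=T\cup Y$. *)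

theory Defs
  imports Main
begin

text \<open>A parity game over vertex type 'v. Players are encoded as naturals: 0 = Even, 1 = Odd.\<close>

record 'v game =
  V0 :: "'v set"
  V1 :: "'v set"
  E  :: "('v \<times> 'v) set"
  pr :: "'v \<Rightarrow> nat"

definition verts :: "('v, 'a) game_scheme \<Rightarrow> 'v set" where
  "verts G = V0 G \<union> V1 G"

definition Vp :: "('v, 'a) game_scheme \<Rightarrow> nat \<Rightarrow> 'v set" where
  "Vp G \<alpha> = (if \<alpha> = 0 then V0 G else V1 G)"

definition opp :: "nat \<Rightarrow> nat" where
  "opp \<alpha> = 1 - \<alpha>"

definition wf_game :: "'v game \<Rightarrow> bool" where
  "wf_game G \<longleftrightarrow> finite (verts G) \<and> V0 G \<inter> V1 G = {} \<and> E G \<subseteq> verts G \<times> verts G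
     \<and> (\<forall>v\<in>verts G. \<exists>w. (v, w) \<in> E G)"

definition subgame :: "'v game \<Rightarrow> 'v set \<Rightarrow> 'v game" where
  "subgame G U = \<lparr>V0 = V0 G \<inter> U, V1 = V1 G \<inter> U, E = E G \<inter> (U \<times> U), pr = pr G\<rparr>"

definition prmax :: "'v game \<Rightarrow> 'v set \<Rightarrow> nat" where
  "prmax G U = Max (pr G ` U)"

definition is_play :: "'v game \<Rightarrow> (nat \<Rightarrow> 'v) \<Rightarrow> bool" where
  "is_play G \<rho> \<longleftrightarrow> (\<forall>i. (\<rho> i, \<rho> (Suc i)) \<in> E G)"

definition consistent :: "('v \<rightharpoonup> 'v) \<Rightarrow> (nat \<Rightarrow> 'v) \<Rightarrow> bool" where
  "consistent \<sigma> \<rho> \<longleftrightarrow> (\<forall>i w. \<sigma> (\<rho> i) = Some w \<longrightarrow> \<rho> (Suc i) = w)"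

definition inf_prios :: "'v game \<Rightarrow> (nat \<Rightarrow> 'v) \<Rightarrow> nat set" where
  "inf_prios G \<rho> = {q. \<exists>\<^sub>\<infinity> i. pr G (\<rho> i) = q}"

definition play_won_by :: "'v game \<Rightarrow> nat \<Rightarrow> (nat \<Rightarrow> 'v) \<Rightarrow> bool" where
  "play_won_by G \<alpha> \<rho> \<longleftrightarrow> Max (inf_prios G \<rho>) mod 2 = \<alpha>"

text \<open>A tangle is represented together with its witness strategy.\<close>
type_synonym 'v tangle = "'v set \<times> ('v \<rightharpoonup> 'v)"

definition tangle_graph :: "'v game \<Rightarrow> 'v set \<Rightarrow> ('v \<rightharpoonup> 'v) \<Rightarrow> ('v \<times> 'v) set" where
  "tangle_graph G U \<sigma> =
     (let \<alpha> = prmax G U mod 2 in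
       {(u, w). u \<in> U \<inter> Vp G \<alpha> \<and> \<sigma> u = Some w}
       \<union> {(u, w). (u, w) \<in> E G \<and> u \<in> U \<inter> Vp G (opp \<alpha>) \<and> w \<in> U})"

definition is_cycle :: "('v \<times> 'v) set \<Rightarrow> 'v list \<Rightarrow> bool" where
  "is_cycle R xs \<longleftrightarrow> xs \<noteq> [] \<and>
     (\<forall>i < length xs. (xs ! i, xs ! (Suc i mod length xs)) \<in> R)"

definition is_tangle :: "'v game \<Rightarrow> 'v tangle \<Rightarrow> bool" where
  "is_tangle G t \<longleftrightarrow>
     (let U = fst t; \<sigma> = snd t; \<alpha> = prmax G U mod 2; R = tangle_graph G U \<sigma> in
       U \<noteq> {} \<and> U \<subseteq> verts G \<and>
       dom \<sigma> = U \<inter> Vp G \<alpha> \<and>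
       (\<forall>u \<in> U \<inter> Vp G \<alpha>. \<exists>w. \<sigma> u = Some w \<and> w \<in> U \<and> (u, w) \<in> E G) \<and>
       (\<forall>u\<in>U. \<forall>w\<in>U. (u, w) \<in> R\<^sup>*) \<and>
       (\<forall>xs. is_cycle R xs \<longrightarrow> Max (pr G ` set xs) mod 2 = \<alpha>))"

definition escapes :: "'v game \<Rightarrow> 'v tangle \<Rightarrow> 'v set" where
  "escapes G t = (let U = fst t; \<alpha> = prmax G U mod 2 in
     {v. v \<notin> U \<and> (\<exists>u \<in> U \<inter> Vp G (opp \<alpha>). (u, v) \<in> E G)})"

inductive tattr_step ::
  "'v game \<Rightarrow> 'v tangle set \<Rightarrow> nat \<Rightarrow> 'v set \<Rightarrow> ('v set \<times> ('v \<rightharpoonup> 'v)) \<Rightarrow> ('v set \<times> ('v \<rightharpoonup> 'v)) \<Rightarrow> bool"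
  for G T \<alpha> A where
  attr_own: "\<lbrakk>v \<in> Vp G \<alpha>; v \<notin> Z; w \<in> Z; (v, w) \<in> E G\<rbrakk>
     \<Longrightarrow> tattr_step G T \<alpha> A (Z, \<sigma>) (Z \<union> {v}, \<sigma>(v \<mapsto> w))"
| attr_opp: "\<lbrakk>v \<in> Vp G (opp \<alpha>); v \<notin> Z; {w. (v, w) \<in> E G} \<subseteq> Z\<rbrakk>
     \<Longrightarrow> tattr_step G T \<alpha> A (Z, \<sigma>) (Z \<union> {v}, \<sigma>)"
| attr_tangle: "\<lbrakk>(U, \<tau>) \<in> T; prmax G U mod 2 = \<alpha>; \<not> U \<subseteq> Z;
     escapes G (U, \<tau>) \<noteq> {}; escapes G (U, \<tau>) \<subseteq> Z\<rbrakk>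
     \<Longrightarrow> tattr_step G T \<alpha> A (Z, \<sigma>)
           (Z \<union> U, \<lambda>u. if u \<in> U \<inter> Vp G \<alpha> \<and> \<sigma> u = None then \<tau> u else \<sigma> u)"
| attr_target: "\<lbrakk>v \<in> A \<inter> Vp G \<alpha>; \<sigma> v = None; w \<in> Z; (v, w) \<in> E G\<rbrakk>
     \<Longrightarrow> tattr_step G T \<alpha> A (Z, \<sigma>) (Z, \<sigma>(v \<mapsto> w))"

definition tattr ::
  "'v game \<Rightarrow> 'v tangle set \<Rightarrow> nat \<Rightarrow> 'v set \<Rightarrow> ('v set \<times> ('v \<rightharpoonup> 'v)) \<Rightarrow> bool" where
  "tattr G T \<alpha> A s \<longleftrightarrow> (tattr_step G T \<alpha> A)\<^sup>*\<^sup>* (A, Map.empty) s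
     \<and> \<not> (\<exists>s'. tattr_step G T \<alpha> A s s')"

definition closed_in :: "'v game \<Rightarrow> nat \<Rightarrow> ('v \<rightharpoonup> 'v) \<Rightarrow> 'v set \<Rightarrow> bool" where
  "closed_in G \<alpha> \<sigma> X \<longleftrightarrow>
     (\<forall>v \<in> X \<inter> Vp G (opp \<alpha>). \<forall>w. (v, w) \<in> E G \<longrightarrow> w \<in> X) \<and>
     (\<forall>v \<in> X \<inter> Vp G \<alpha>. \<exists>w. \<sigma> v = Some w \<and> w \<in> X)"

text \<open>The greatest closed subset of Z (closed sets are closed under unions).\<close>
definition greatest_closed :: "'v game \<Rightarrow> nat \<Rightarrow> 'v set \<Rightarrow> ('v \<rightharpoonup> 'v) \<Rightarrow> 'v set" where
  "greatest_closed G \<alpha> Z \<sigma> = \<Union> {X. X \<subseteq> Z \<and> closed_in G \<alpha> \<sigma> X}"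

definition extract_graph :: "'v game \<Rightarrow> nat \<Rightarrow> 'v set \<Rightarrow> ('v \<rightharpoonup> 'v) \<Rightarrow> ('v \<times> 'v) set" where
  "extract_graph G \<alpha> Y \<sigma> =
     {(v, w). v \<in> Y \<inter> Vp G \<alpha> \<and> \<sigma> v = Some w}
     \<union> {(v, w). (v, w) \<in> E G \<and> v \<in> Y \<inter> Vp G (opp \<alpha>)}"

definition bottom_scc :: "('v \<times> 'v) set \<Rightarrow> 'v set \<Rightarrow> 'v set \<Rightarrow> bool" where
  "bottom_scc H Y C \<longleftrightarrow> C \<noteq> {} \<and> C \<subseteq> Y \<and>
     (\<forall>u\<in>C. \<forall>w\<in>C. (u, w) \<in> H\<^sup>*) \<and>
     (\<forall>u\<in>C. \<forall>w. (u, w) \<in> H \<longrightarrow> w \<in> C)"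

definition extract_tangles :: "'v game \<Rightarrow> nat \<Rightarrow> 'v set \<Rightarrow> ('v \<rightharpoonup> 'v) \<Rightarrow> 'v tangle set" where
  "extract_tangles G \<alpha> Z \<sigma> =
     (let Y = greatest_closed G \<alpha> Z \<sigma>; H = extract_graph G \<alpha> Y \<sigma> in
       {(C, \<sigma> |` (C \<inter> Vp G \<alpha>)) | C. bottom_scc H Y C \<and> (\<exists>u\<in>C. \<exists>w\<in>C. (u, w) \<in> H)})"

text \<open>States of search: (T, dom r, Y). Only the domain of the region function matters for
  the control flow.\<close>
type_synonym 'v search_state = "'v tangle set \<times> 'v set \<times> 'v tangle set"

definition cur_subgame :: "'v game \<Rightarrow> 'v set \<Rightarrow> 'v game" where
  "cur_subgame G D = subgame G (verts G - D)"

definition cur_tangles :: "'v game \<Rightarrow> 'v tangle set \<Rightarrow> 'v set \<Rightarrow> 'v tangle set" where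
  "cur_tangles G T D = {t \<in> T. fst t \<subseteq> verts G - D}"

text \<open>Transitions of search that do not return. The inner-loop step requires that no
  extracted tangle has empty escape set in the full game (otherwise search returns).\<close>
inductive search_step :: "'v game \<Rightarrow> 'v search_state \<Rightarrow> 'v search_state \<Rightarrow> bool" for G where
  inner: "\<lbrakk>verts G - D \<noteq> {};
      p = prmax G (verts G - D);
      tattr (cur_subgame G D) (cur_tangles G T D) (p mod 2)
            ((verts G - D) \<inter> {v. pr G v = p}) (Z, \<sigma>);
      \<forall>t \<in> extract_tangles (cur_subgame G D) (p mod 2) Z \<sigma>. escapes G t \<noteq> {}\<rbrakk>
    \<Longrightarrow> search_step G (T, D, Y)
          (T, D \<union> Z, Y \<union> extract_tangles (cur_subgame G D) (p mod 2) Z \<sigma>)"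
| outer: "verts G - D = {} \<Longrightarrow> search_step G (T, D, Y) (T \<union> Y, {}, {})"

definition search_reachable :: "'v game \<Rightarrow> 'v tangle set \<Rightarrow> 'v search_state \<Rightarrow> bool" where
  "search_reachable G T0 s \<longleftrightarrow> (search_step G)\<^sup>*\<^sup>* (T0, {}, {}) s"

end

theory Submission
  imports Defs "HOL-Library.Infinite_Set"
begin


lemma inf_prios_iff: "q \<in> inf_prios H \<rho> \<longleftrightarrow> infinite {i. pr H (\<rho> i) = q}"
  by (simp add: inf_prios_def frequently_cofinite)

lemma Vp_sub: "Vp H a \<subseteq> verts H"
  by (auto simp: Vp_def verts_def)

lemma Vp_opp_cases:
  assumes "a < 2" "v \<in> verts H" "v \<notin> Vp H a" shows "v \<in> Vp H (opp a)"
  using assms by (auto simp: Vp_def verts_def opp_def)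

lemma Vp_opp_disj:
  assumes "a < 2" "V0 H \<inter> V1 H = {}" "v \<in> Vp H a" shows "v \<notin> Vp H (opp a)"
  using assms by (auto simp: Vp_def opp_def)

definition good_edge :: "'v game \<Rightarrow> 'v tangle set \<Rightarrow> nat \<Rightarrow> 'v set \<Rightarrow> 'v set \<Rightarrow> ('v \<Rightarrow> nat)
   \<Rightarrow> (nat \<Rightarrow> 'v tangle) \<Rightarrow> 'v \<Rightarrow> 'v \<Rightarrow> bool" where
  "good_edge H T a A Z rk tg v w \<longleftrightarrow> w \<in> Z \<and> (w \<in> A \<or> rk w < rk v \<or>
     (rk w = rk v \<and> tg (rk v) \<in> T \<and> prmax H (fst (tg (rk v))) mod 2 = a \<and>
      (v, w) \<in> tangle_graph H (fst (tg (rk v))) (snd (tg (rk v)))))"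

definition ainv :: "'v game \<Rightarrow> 'v tangle set \<Rightarrow> nat \<Rightarrow> 'v set \<Rightarrow> 'v set \<Rightarrow> ('v \<rightharpoonup> 'v) \<Rightarrow> ('v \<Rightarrow> nat)
   \<Rightarrow> (nat \<Rightarrow> 'v tangle) \<Rightarrow> nat \<Rightarrow> bool" where
  "ainv H T a A Z \<sigma> rk tg n \<longleftrightarrow> A \<subseteq> Z \<and> Z \<subseteq> verts H \<and> dom \<sigma> \<subseteq> Z \<inter> Vp H a \<and>
     (\<forall>v w. \<sigma> v = Some w \<longrightarrow> (v, w) \<in> E H \<and> w \<in> Z) \<and>
     (\<forall>v \<in> (Z - A) \<inter> Vp H a. \<sigma> v \<noteq> None) \<and>
     (\<forall>v \<in> Z - A. rk v < n) \<and>
     (\<forall>v \<in> Z - A. \<forall>w. (v, w) \<in> E H \<longrightarrow> (\<forall>x. \<sigma> v = Some x \<longrightarrow> w = x) \<longrightarrow>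
        good_edge H T a A Z rk tg v w)"

lemma good_edge_mono:
  assumes "good_edge H T a A Z rk tg v w" "Z \<subseteq> Z'" "\<forall>x\<in>Z - A. rk' x = rk x"
    "v \<in> Z - A" "\<forall>k<n. tg' k = tg k" "rk v < n"
  shows "good_edge H T a A Z' rk' tg' v w"
  using assms unfolding good_edge_def by (cases "w \<in> A") auto

locale actx =
  fixes H :: "'v game" and T :: "'v tangle set" and a :: nat and A :: "'v set" and p :: nat
  assumes fin: "finite (verts H)" and disj: "V0 H \<inter> V1 H = {}"
    and tang: "\<forall>t\<in>T. is_tangle H t" and alpha: "a < 2" and Asub: "A \<subseteq> verts H"
    and pA: "\<forall>v\<in>A. pr H v = p" and pmax: "\<forall>v\<in>verts H. pr H v \<le> p" and pmod: "p mod 2 = a"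
begin

lemma inv_init: "ainv H T a A A Map.empty rk tg 0"
  using Asub by (simp add: ainv_def)

lemma inv_own:
  assumes inv: "ainv H T a A Z \<sigma> rk tg n"
    and v: "v \<in> Vp H a" "v \<notin> Z" "w \<in> Z" "(v, w) \<in> E H"
  shows "ainv H T a A (Z \<union> {v}) (\<sigma>(v \<mapsto> w)) (rk(v := n)) tg (Suc n)"
proof -
  have vw: "v \<noteq> w" using v by auto
  from inv have i: "A \<subseteq> Z" "Z \<subseteq> verts H" "dom \<sigma> \<subseteq> Z \<inter> Vp H a"
    "\<forall>v w. \<sigma> v = Some w \<longrightarrow> (v, w) \<in> E H \<and> w \<in> Z"
    "\<forall>v \<in> (Z - A) \<inter> Vp H a. \<sigma> v \<noteq> None" "\<forall>v \<in> Z - A. rk v < n"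
    "\<forall>v \<in> Z - A. \<forall>w. (v, w) \<in> E H \<longrightarrow> (\<forall>x. \<sigma> v = Some x \<longrightarrow> w = x) \<longrightarrow>
        good_edge H T a A Z rk tg v w"
    unfolding ainv_def by auto
  have ge: "good_edge H T a A (Z \<union> {v}) (rk(v := n)) tg x y"
    if "x \<in> Z \<union> {v} - A" "(x, y) \<in> E H" "\<forall>z. (\<sigma>(v \<mapsto> w)) x = Some z \<longrightarrow> y = z" for x y
  proof (cases "x = v")
    case True
    then have "y = w" using that by auto
    then show ?thesis using True v i(6) vw by (auto simp: good_edge_def)
  next
    case False
    then have "x \<in> Z - A" using that by auto
    moreover have g: "good_edge H T a A Z rk tg x y" using i(7) that False calculation by auto
    ultimately show ?thesis
      by (intro good_edge_mono[OF g, where n=n]) (use v i(6) in auto)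
  qed
  have vv: "v \<in> verts H" using Vp_sub[of H a] v(1) by blast
  have rr: "\<forall>x\<in>Z - A. rk x < Suc n" using i(6) by (meson less_SucI)
  show ?thesis unfolding ainv_def
    using i v vv rr ge by (auto simp: subset_iff)
qed

lemma inv_opp:
  assumes inv: "ainv H T a A Z \<sigma> rk tg n"
    and v: "v \<in> Vp H (opp a)" "v \<notin> Z" "{w. (v, w) \<in> E H} \<subseteq> Z"
  shows "ainv H T a A (Z \<union> {v}) \<sigma> (rk(v := n)) tg (Suc n)"
proof -
  from inv have i: "A \<subseteq> Z" "Z \<subseteq> verts H" "dom \<sigma> \<subseteq> Z \<inter> Vp H a"
    "\<forall>v w. \<sigma> v = Some w \<longrightarrow> (v, w) \<in> E H \<and> w \<in> Z"
    "\<forall>v \<in> (Z - A) \<inter> Vp H a. \<sigma> v \<noteq> None" "\<forall>v \<in> Z - A. rk v < n"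
    "\<forall>v \<in> Z - A. \<forall>w. (v, w) \<in> E H \<longrightarrow> (\<forall>x. \<sigma> v = Some x \<longrightarrow> w = x) \<longrightarrow>
        good_edge H T a A Z rk tg v w"
    unfolding ainv_def by auto
  have vna: "v \<notin> Vp H a" using Vp_opp_disj[OF alpha disj] v(1) Vp_opp_disj[OF _ disj, of "opp a"] alpha
    by (auto simp: Vp_def opp_def split: if_splits)
  have ge: "good_edge H T a A (Z \<union> {v}) (rk(v := n)) tg x y"
    if "x \<in> Z \<union> {v} - A" "(x, y) \<in> E H" "\<forall>z. \<sigma> x = Some z \<longrightarrow> y = z" for x y
  proof (cases "x = v")
    case True
    then have "y \<in> Z" using that v by auto
    then show ?thesis using True v i(6) by (auto simp: good_edge_def)
  next
    case False
    then have "x \<in> Z - A" using that by auto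
    moreover have g: "good_edge H T a A Z rk tg x y" using i(7) that False calculation by auto
    ultimately show ?thesis
      by (intro good_edge_mono[OF g, where n=n]) (use v i(6) in auto)
  qed
  have vv: "v \<in> verts H" using Vp_sub[of H "opp a"] v(1) by blast
  have rr: "\<forall>x\<in>Z - A. rk x < Suc n" using i(6) by (meson less_SucI)
  show ?thesis unfolding ainv_def
    using i v vv rr ge vna by (auto simp: subset_iff)
qed

lemma inv_target:
  assumes inv: "ainv H T a A Z \<sigma> rk tg n"
    and v: "v \<in> A \<inter> Vp H a" "\<sigma> v = None" "w \<in> Z" "(v, w) \<in> E H"
  shows "ainv H T a A Z (\<sigma>(v \<mapsto> w)) rk tg n"
proof -
  from inv have i: "A \<subseteq> Z" "Z \<subseteq> verts H" "dom \<sigma> \<subseteq> Z \<inter> Vp H a"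
    "\<forall>v w. \<sigma> v = Some w \<longrightarrow> (v, w) \<in> E H \<and> w \<in> Z"
    "\<forall>v \<in> (Z - A) \<inter> Vp H a. \<sigma> v \<noteq> None" "\<forall>v \<in> Z - A. rk v < n"
    "\<forall>v \<in> Z - A. \<forall>w. (v, w) \<in> E H \<longrightarrow> (\<forall>x. \<sigma> v = Some x \<longrightarrow> w = x) \<longrightarrow>
        good_edge H T a A Z rk tg v w"
    unfolding ainv_def by auto
  show ?thesis unfolding ainv_def
    using i v by (auto simp: subset_iff)
qed


lemma tangle_props:
  assumes "(U, \<tau>) \<in> T" "prmax H U mod 2 = a"
  shows "U \<subseteq> verts H" "dom \<tau> = U \<inter> Vp H a"
    "\<forall>u \<in> U \<inter> Vp H a. \<exists>w. \<tau> u = Some w \<and> w \<in> U \<and> (u, w) \<in> E H"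
    "\<forall>xs. is_cycle (tangle_graph H U \<tau>) xs \<longrightarrow> Max (pr H ` set xs) mod 2 = a"
proof -
  have "is_tangle H (U, \<tau>)" using tang assms(1) by blast
  then show "U \<subseteq> verts H" "dom \<tau> = U \<inter> Vp H a"
    "\<forall>u \<in> U \<inter> Vp H a. \<exists>w. \<tau> u = Some w \<and> w \<in> U \<and> (u, w) \<in> E H"
    "\<forall>xs. is_cycle (tangle_graph H U \<tau>) xs \<longrightarrow> Max (pr H ` set xs) mod 2 = a"
    using assms(2) unfolding is_tangle_def Let_def fst_conv snd_conv by auto
qed

lemma inv_tangle:
  assumes inv: "ainv H T a A Z \<sigma> rk tg n"
    and t: "(U, \<tau>) \<in> T" "prmax H U mod 2 = a" "escapes H (U, \<tau>) \<subseteq> Z"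
  shows "ainv H T a A (Z \<union> U) (\<lambda>u. if u \<in> U \<inter> Vp H a \<and> \<sigma> u = None then \<tau> u else \<sigma> u)
     (\<lambda>x. if x \<in> Z then rk x else n) (tg(n := (U, \<tau>))) (Suc n)"
proof -
  define \<sigma>' where "\<sigma>' = (\<lambda>u. if u \<in> U \<inter> Vp H a \<and> \<sigma> u = None then \<tau> u else \<sigma> u)"
  define rk' where "rk' = (\<lambda>x. if x \<in> Z then rk x else n)"
  define tg' where "tg' = tg(n := (U, \<tau>))"
  from inv have i: "A \<subseteq> Z" "Z \<subseteq> verts H" "dom \<sigma> \<subseteq> Z \<inter> Vp H a"
    "\<forall>v w. \<sigma> v = Some w \<longrightarrow> (v, w) \<in> E H \<and> w \<in> Z"
    "\<forall>v \<in> (Z - A) \<inter> Vp H a. \<sigma> v \<noteq> None" "\<forall>v \<in> Z - A. rk v < n"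
    "\<forall>v \<in> Z - A. \<forall>w. (v, w) \<in> E H \<longrightarrow> (\<forall>x. \<sigma> v = Some x \<longrightarrow> w = x) \<longrightarrow>
        good_edge H T a A Z rk tg v w"
    unfolding ainv_def by auto
  note tp = tangle_props[OF t(1,2)]
  have c1: "Z \<union> U \<subseteq> verts H" using i(2) tp(1) by auto
  have c2: "dom \<sigma>' \<subseteq> (Z \<union> U) \<inter> Vp H a"
  proof
    fix x assume "x \<in> dom \<sigma>'"
    then show "x \<in> (Z \<union> U) \<inter> Vp H a" using i(3) unfolding \<sigma>'_def by (auto split: if_splits simp: dom_def subset_iff)
  qed
  have c3: "\<forall>v w. \<sigma>' v = Some w \<longrightarrow> (v, w) \<in> E H \<and> w \<in> Z \<union> U"
  proof (intro allI impI)
    fix v w assume h: "\<sigma>' v = Some w"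
    show "(v, w) \<in> E H \<and> w \<in> Z \<union> U"
    proof (cases "v \<in> U \<inter> Vp H a \<and> \<sigma> v = None")
      case True
      then have "\<tau> v = Some w" using h by (simp add: \<sigma>'_def)
      then show ?thesis using tp(3) True by force
    next
      case False
      then have "\<sigma> v = Some w" using h unfolding \<sigma>'_def by (simp only: if_False)
      then show ?thesis using i(4) by auto
    qed
  qed
  have old: "\<sigma>' x = \<sigma> x" if "x \<in> Z - A" for x
  proof -
    have "\<not> (x \<in> Vp H a \<and> \<sigma> x = None)" using that i(5) by blast
    then show ?thesis unfolding \<sigma>'_def by auto
  qed
  have c4: "\<forall>v \<in> (Z \<union> U - A) \<inter> Vp H a. \<sigma>' v \<noteq> None"
  proof
    fix v assume v: "v \<in> (Z \<union> U - A) \<inter> Vp H a"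
    show "\<sigma>' v \<noteq> None"
    proof (cases "v \<in> Z")
      case True then show ?thesis using old i(5) v by auto
    next
      case False
      then have "\<sigma> v = None" using i(3) by auto
      then show ?thesis using v False tp(3) by (auto simp: \<sigma>'_def)
    qed
  qed
  have c5': "\<forall>v \<in> Z \<union> U - A. rk' v < Suc n"
  proof
    fix v assume v: "v \<in> Z \<union> U - A"
    show "rk' v < Suc n"
    proof (cases "v \<in> Z")
      case True
      then have "rk v < n" using i(6) v by blast
      then show ?thesis using True by (simp add: rk'_def)
    next
      case False
      then show ?thesis by (simp add: rk'_def)
    qed
  qed
  have c6: "good_edge H T a A (Z \<union> U) rk' tg' x y"
    if x: "x \<in> Z \<union> U - A" and e: "(x, y) \<in> E H" and c: "\<forall>z. \<sigma>' x = Some z \<longrightarrow> y = z" for x y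
  proof (cases "x \<in> Z")
    case True
    then have xz: "x \<in> Z - A" using x by auto
    have c': "\<forall>z. \<sigma> x = Some z \<longrightarrow> y = z" using c old[OF xz] by simp
    have g: "good_edge H T a A Z rk tg x y" using i(7) xz e c' by blast
    show ?thesis
    proof (rule good_edge_mono[OF g, where n=n])
      show "Z \<subseteq> Z \<union> U" by blast
      show "\<forall>x\<in>Z - A. rk' x = rk x" by (simp add: rk'_def)
      show "x \<in> Z - A" by (rule xz)
      show "\<forall>k<n. tg' k = tg k" by (simp add: tg'_def)
      show "rk x < n" using xz i(6) by blast
    qed
  next
    case False
    then have xU: "x \<in> U" using x by blast
    have "x \<notin> dom \<sigma>" using False i(3) by blast
    then have sn: "\<sigma> x = None" by (simp add: domIff)
    have rkx: "rk' x = n" using False by (simp add: rk'_def)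
    have tgn: "tg' (rk' x) = (U, \<tau>)" using rkx by (simp add: tg'_def)
    have lowok: "y \<in> A \<or> rk' y < rk' x" if yz: "y \<in> Z"
    proof (cases "y \<in> A")
      case False
      then have "rk y < n" using yz i(6) by blast
      then show ?thesis using yz rkx by (simp add: rk'_def)
    qed simp
    have tgok: "tg' (rk' x) \<in> T \<and> prmax H (fst (tg' (rk' x))) mod 2 = a" using tgn t by simp
    show ?thesis
    proof (cases "x \<in> Vp H a")
      case True
      obtain w where w: "\<tau> x = Some w" "w \<in> U" using tp(3) True xU by blast
      have "\<sigma>' x = Some w" using w True xU sn by (simp add: \<sigma>'_def)
      then have yw: "y = w" using c by simp
      have tge: "(x, y) \<in> tangle_graph H U \<tau>"
        using True xU w yw t(2) by (simp add: tangle_graph_def)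
      show ?thesis
      proof (cases "y \<in> Z")
        case True then show ?thesis using lowok unfolding good_edge_def by auto
      next
        case False
        then have "rk' y = rk' x" using rkx by (simp add: rk'_def)
        then show ?thesis using tgok tgn tge yw w(2) unfolding good_edge_def by auto
      qed
    next
      case False
      have xv: "x \<in> verts H" using xU tp(1) by blast
      have xo: "x \<in> Vp H (opp a)" by (rule Vp_opp_cases[OF alpha xv False])
      show ?thesis
      proof (cases "y \<in> U")
        case False
        then have "y \<in> escapes H (U, \<tau>)" using xo xU e t(2) by (auto simp: escapes_def)
        then have "y \<in> Z" using t(3) by auto
        then show ?thesis using lowok unfolding good_edge_def by auto
      next
        case yU: True
        show ?thesis
        proof (cases "y \<in> Z")
          case True then show ?thesis using lowok unfolding good_edge_def by auto
        next
          case False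
          then have r: "rk' y = rk' x" using rkx by (simp add: rk'_def)
          have tge: "(x, y) \<in> tangle_graph H U \<tau>"
            using xo xU yU e t(2) by (simp add: tangle_graph_def)
          show ?thesis using r tgok tgn tge yU unfolding good_edge_def by auto
        qed
      qed
    qed
  qed
  show ?thesis
    unfolding ainv_def \<sigma>'_def[symmetric] rk'_def[symmetric] tg'_def[symmetric]
  proof (intro conjI)
    show "A \<subseteq> Z \<union> U" using i(1) by blast
    show "\<forall>v\<in>Z \<union> U - A. \<forall>w. (v, w) \<in> E H \<longrightarrow> (\<forall>x. \<sigma>' v = Some x \<longrightarrow> w = x) \<longrightarrow>
        good_edge H T a A (Z \<union> U) rk' tg' v w" using c6 by blast
  qed (fact c1 c2 c3 c4 c5')+
qed

lemma inv_step:
  assumes "tattr_step H T a A s s'" "ainv H T a A (fst s) (snd s) rk tg n"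
  shows "\<exists>rk' tg' n'. ainv H T a A (fst s') (snd s') rk' tg' n'"
  using assms(1)
proof cases
  case (attr_own v Z w \<sigma>)
  then show ?thesis using inv_own assms(2) by fastforce
next
  case (attr_opp v Z \<sigma>)
  then show ?thesis using inv_opp assms(2) by fastforce
next
  case (attr_tangle U \<tau> Z \<sigma>)
  then show ?thesis using inv_tangle assms(2) by fastforce
next
  case (attr_target v \<sigma> w Z)
  then show ?thesis using inv_target assms(2) by fastforce
qed

lemma inv_reach:
  assumes "(tattr_step H T a A)\<^sup>*\<^sup>* (A, Map.empty) s"
  shows "\<exists>rk tg n. ainv H T a A (fst s) (snd s) rk tg n"
  using assms
proof (induction rule: rtranclp_induct)
  case base
  then show ?case using inv_init by (metis fst_conv snd_conv)
next
  case (step y z)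
  then show ?case using inv_step by blast
qed

end


lemma inf_prios_sub: "inf_prios H \<rho> \<subseteq> pr H ` range \<rho>"
proof
  fix q assume "q \<in> inf_prios H \<rho>"
  then have "infinite {i. pr H (\<rho> i) = q}" by (simp add: inf_prios_iff)
  then have "{i. pr H (\<rho> i) = q} \<noteq> {}" by (metis finite.emptyI)
  then obtain i where "pr H (\<rho> i) = q" by blast
  then show "q \<in> pr H ` range \<rho>" by blast
qed

lemma eventually_const:
  fixes r :: "nat \<Rightarrow> nat"
  assumes mono: "\<forall>i\<ge>N. r (Suc i) \<le> r i"
  shows "\<exists>M\<ge>N. \<forall>i\<ge>M. r i = r M"
proof -
  define m where "m = (LEAST x. \<exists>i\<ge>N. r i = x)"
  have "\<exists>i\<ge>N. r i = m" unfolding m_def by (rule LeastI_ex) blast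
  then obtain i0 where i0: "i0 \<ge> N" "r i0 = m" by blast
  have le: "r i \<le> r i0" if "i \<ge> i0" for i
    using that
  proof (induction i rule: dec_induct)
    case base then show ?case by simp
  next
    case (step j)
    then have "r (Suc j) \<le> r j" using mono i0(1) by simp
    then show ?case using step by simp
  qed
  have ge: "m \<le> r i" if "i \<ge> N" for i
    unfolding m_def by (rule Least_le) (use that in blast)
  show ?thesis
  proof (intro exI[of _ i0] conjI allI impI)
    show "N \<le> i0" by (rule i0(1))
    fix i assume "i0 \<le> i"
    then show "r i = r i0" using le[of i] ge[of i] i0 by simp
  qed
qed

lemma walk_cycle:
  fixes \<rho> :: "nat \<Rightarrow> 'v"
  assumes fin: "finite (range \<rho>)" and walk: "\<forall>i\<ge>M. (\<rho> i, \<rho> (Suc i)) \<in> R"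
    and cyc: "\<forall>xs. is_cycle R xs \<longrightarrow> Max (pr H ` set xs) mod 2 = a"
  shows "Max (inf_prios H \<rho>) mod 2 = a"
proof -
  have finp: "finite (inf_prios H \<rho>)"
    using inf_prios_sub fin by (metis finite_imageI finite_subset)
  obtain v0 where "v0 \<in> \<rho> ` UNIV" "infinite (\<rho> -` {v0})"
    using inf_img_fin_domE[OF fin infinite_UNIV_nat] by blast
  then have "infinite {i. pr H (\<rho> i) = pr H v0}"
    by (rule_tac infinite_super[of "\<rho> -` {v0}"]) auto
  then have "pr H v0 \<in> inf_prios H \<rho>" by (simp add: inf_prios_iff)
  then have nE: "inf_prios H \<rho> \<noteq> {}" by blast
  define q where "q = Max (inf_prios H \<rho>)"
  have qin: "q \<in> inf_prios H \<rho>" unfolding q_def using finp nE by simp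
  then have Iinf: "infinite {i. pr H (\<rho> i) = q}" by (simp add: inf_prios_iff)
  have "finite (\<rho> ` {i. pr H (\<rho> i) = q})" using fin by (metis finite_subset image_subsetI rangeI)
  then obtain v where v: "v \<in> \<rho> ` {i. pr H (\<rho> i) = q}"
    "infinite (\<rho> -` {v} \<inter> {i. pr H (\<rho> i) = q})"
    using inf_img_fin_dom'[OF _ Iinf] by blast
  have prv: "pr H v = q" using v(1) by blast
  have vinf: "infinite {i. \<rho> i = v}"
    using v(2) by (rule infinite_super[rotated]) auto
  define B where "B = {i. q < pr H (\<rho> i)}"
  have "B \<subseteq> (\<Union>q' \<in> {q' \<in> pr H ` range \<rho>. q < q'}. {i. pr H (\<rho> i) = q'})"
    unfolding B_def by auto
  moreover have "finite (\<Union>q' \<in> {q' \<in> pr H ` range \<rho>. q < q'}. {i. pr H (\<rho> i) = q'})"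
  proof (rule finite_UN_I)
    show "finite {q' \<in> pr H ` range \<rho>. q < q'}" using fin by simp
    fix q' assume "q' \<in> {q' \<in> pr H ` range \<rho>. q < q'}"
    then have "q < q'" by simp
    then have "q' \<notin> inf_prios H \<rho>" using finp unfolding q_def by (meson Max_ge leD)
    then show "finite {i. pr H (\<rho> i) = q'}" by (simp add: inf_prios_iff)
  qed
  ultimately have "finite B" by (rule finite_subset)
  then obtain N where N: "\<forall>i\<in>B. i \<le> N" using finite_nat_set_iff_bounded_le by blast
  have small: "pr H (\<rho> i) \<le> q" if "i > N" for i
    using N that unfolding B_def by (meson leD not_le_imp_less mem_Collect_eq)
  obtain i where i: "i \<ge> M + N + 1" "\<rho> i = v"
    using vinf unfolding infinite_nat_iff_unbounded_le by blast
  obtain j where j: "j \<ge> Suc i" "\<rho> j = v"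
    using vinf unfolding infinite_nat_iff_unbounded_le by blast
  define xs where "xs = map \<rho> [i..<j]"
  have len: "length xs = j - i" "j - i > 0" using j(1) by (auto simp: xs_def)
  have nth: "xs ! k = \<rho> (i + k)" if "k < j - i" for k
    using that by (simp add: xs_def)
  have "is_cycle R xs"
    unfolding is_cycle_def
  proof (intro conjI allI impI)
    show "xs \<noteq> []" using len by auto
    fix k assume k: "k < length xs"
    have a1: "xs ! k = \<rho> (i + k)" using k len nth by simp
    have a2: "xs ! (Suc k mod length xs) = \<rho> (Suc (i + k))"
    proof (cases "Suc k < j - i")
      case True
      then show ?thesis using len nth by simp
    next
      case False
      then have "Suc k = j - i" using k len by simp
      then have "Suc k mod length xs = 0" "Suc (i + k) = j" using len j(1) by auto
      then show ?thesis using nth[of 0] len i(2) j(2) by simp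
    qed
    show "(xs ! k, xs ! (Suc k mod length xs)) \<in> R"
      unfolding a1 a2 using walk i(1) by simp
  qed
  then have cm: "Max (pr H ` set xs) mod 2 = a" using cyc by blast
  have sx: "set xs = \<rho> ` {i..<j}" by (simp add: xs_def)
  have "Max (pr H ` set xs) = q"
  proof (rule Max_eqI)
    show "finite (pr H ` set xs)" by simp
    fix y assume "y \<in> pr H ` set xs"
    then obtain k where "k \<in> {i..<j}" "y = pr H (\<rho> k)" unfolding sx by blast
    then show "y \<le> q" using small i(1) by simp
  next
    show "q \<in> pr H ` set xs" unfolding sx using i(2) j(1) prv by force
  qed
  then show ?thesis using cm q_def by simp
qed

context actx
begin

lemma main:
  assumes reach: "(tattr_step H T a A)\<^sup>*\<^sup>* (A, Map.empty) (Z, \<sigma>)"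
    and play: "is_play H \<rho>" and cons: "consistent \<sigma> \<rho>" and inZ: "\<forall>i. \<rho> i \<in> Z"
  shows "Max (inf_prios H \<rho>) mod 2 = a"
proof -
  obtain rk tg n where inv: "ainv H T a A Z \<sigma> rk tg n"
    using inv_reach[OF reach] by auto
  from inv have i: "A \<subseteq> Z" "Z \<subseteq> verts H"
    "\<forall>v \<in> Z - A. \<forall>w. (v, w) \<in> E H \<longrightarrow> (\<forall>x. \<sigma> v = Some x \<longrightarrow> w = x) \<longrightarrow>
        good_edge H T a A Z rk tg v w"
    unfolding ainv_def by auto
  have rsub: "range \<rho> \<subseteq> verts H" using inZ i(2) by blast
  have finr: "finite (range \<rho>)" using rsub fin by (rule finite_subset)
  have finp: "finite (inf_prios H \<rho>)"
    using inf_prios_sub finr by (metis finite_imageI finite_subset)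
  show ?thesis
  proof (cases "infinite {i. \<rho> i \<in> A}")
    case True
    have "{i. \<rho> i \<in> A} \<subseteq> {i. pr H (\<rho> i) = p}" using pA by blast
    then have "infinite {i. pr H (\<rho> i) = p}" using True by (rule infinite_super)
    then have pin: "p \<in> inf_prios H \<rho>" by (simp add: inf_prios_iff)
    have "Max (inf_prios H \<rho>) = p"
    proof (rule Max_eqI[OF finp])
      fix y assume "y \<in> inf_prios H \<rho>"
      then have "y \<in> pr H ` range \<rho>" using inf_prios_sub by blast
      then show "y \<le> p" using pmax rsub by blast
    qed (rule pin)
    then show ?thesis using pmod by simp
  next
    case False
    then obtain N where N: "\<forall>i\<in>{i. \<rho> i \<in> A}. i \<le> N"
      using finite_nat_set_iff_bounded_le by blast
    have notA: "\<rho> i \<notin> A" if "i \<ge> Suc N" for i using N that by fastforce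
    have ge: "good_edge H T a A Z rk tg (\<rho> i) (\<rho> (Suc i))" if "i \<ge> Suc N" for i
    proof -
      have "\<rho> i \<in> Z - A" using inZ notA that by blast
      moreover have "(\<rho> i, \<rho> (Suc i)) \<in> E H" using play by (simp add: is_play_def)
      moreover have "\<forall>x. \<sigma> (\<rho> i) = Some x \<longrightarrow> \<rho> (Suc i) = x" using cons by (simp add: consistent_def)
      ultimately show ?thesis using i(3) by blast
    qed
    have dec: "\<forall>i\<ge>Suc N. rk (\<rho> (Suc i)) \<le> rk (\<rho> i)"
    proof (intro allI impI)
      fix i assume h: "Suc N \<le> i"
      have "\<rho> (Suc i) \<notin> A" using notA h by simp
      then show "rk (\<rho> (Suc i)) \<le> rk (\<rho> i)" using ge[OF h] unfolding good_edge_def by auto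
    qed
    obtain M where M: "M \<ge> Suc N" "\<forall>i\<ge>M. rk (\<rho> i) = rk (\<rho> M)"
      using eventually_const[OF dec] by blast
    define k where "k = rk (\<rho> M)"
    define U where "U = fst (tg k)"
    define \<tau> where "\<tau> = snd (tg k)"
    have props: "(U, \<tau>) \<in> T \<and> prmax H U mod 2 = a \<and> (\<rho> i, \<rho> (Suc i)) \<in> tangle_graph H U \<tau>"
      if "i \<ge> M" for i
    proof -
      have "\<rho> (Suc i) \<notin> A" using notA that M(1) by simp
      moreover have "rk (\<rho> (Suc i)) = k" unfolding k_def by (rule M(2)[rule_format]) (use that in simp)
      moreover have "rk (\<rho> i) = k" unfolding k_def by (rule M(2)[rule_format]) (use that in simp)
      ultimately show ?thesis using ge[of i] that M(1) unfolding good_edge_def U_def \<tau>_def by auto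
    qed
    have tU: "(U, \<tau>) \<in> T" "prmax H U mod 2 = a" using props[of M] by auto
    show ?thesis
    proof (rule walk_cycle[OF finr])
      show "\<forall>i\<ge>M. (\<rho> i, \<rho> (Suc i)) \<in> tangle_graph H U \<tau>" using props by blast
      show "\<forall>xs. is_cycle (tangle_graph H U \<tau>) xs \<longrightarrow> Max (pr H ` set xs) mod 2 = a"
        using tangle_props(4)[OF tU] .
    qed
  qed
qed

lemma periodic_won:
  assumes reach: "(tattr_step H T a A)\<^sup>*\<^sup>* (A, Map.empty) (Z, \<sigma>)"
    and n: "0 < n" and fn: "f n = f 0"
    and steps: "\<forall>i<n. (f i, f (Suc i)) \<in> E H \<and> f i \<in> Z \<and> (\<forall>w. \<sigma> (f i) = Some w \<longrightarrow> f (Suc i) = w)"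
  shows "Max (pr H ` f ` {..<n}) mod 2 = a"
proof -
  define \<rho> where "\<rho> i = f (i mod n)" for i
  have suc: "\<rho> (Suc i) = f (Suc (i mod n))" for i
    unfolding \<rho>_def using fn by (simp add: mod_Suc)
  have lt: "i mod n < n" for i using n by simp
  have play: "is_play H \<rho>" unfolding is_play_def
    using steps lt suc by (simp add: \<rho>_def)
  have cons: "consistent \<sigma> \<rho>" unfolding consistent_def
    using steps lt suc by (simp add: \<rho>_def)
  have inZ: "\<forall>i. \<rho> i \<in> Z" using steps lt by (simp add: \<rho>_def)
  have eq: "inf_prios H \<rho> = pr H ` f ` {..<n}"
  proof
    show "inf_prios H \<rho> \<subseteq> pr H ` f ` {..<n}"
    proof
      fix q assume "q \<in> inf_prios H \<rho>"
      then have "q \<in> pr H ` range \<rho>" using inf_prios_sub by blast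
      then obtain i where "q = pr H (f (i mod n))" by (auto simp: \<rho>_def)
      then show "q \<in> pr H ` f ` {..<n}" using lt by blast
    qed
  next
    show "pr H ` f ` {..<n} \<subseteq> inf_prios H \<rho>"
    proof
      fix q assume "q \<in> pr H ` f ` {..<n}"
      then obtain k where k: "k < n" "q = pr H (f k)" by blast
      have "inj (\<lambda>m. k + m * n)" using n by (auto intro!: injI)
      then have "infinite (range (\<lambda>m. k + m * n))" by (rule range_inj_infinite)
      moreover have "range (\<lambda>m. k + m * n) \<subseteq> {i. pr H (\<rho> i) = q}"
        using k by (auto simp: \<rho>_def)
      ultimately have "infinite {i. pr H (\<rho> i) = q}" by (rule infinite_super[rotated])
      then show "q \<in> inf_prios H \<rho>" by (simp add: inf_prios_iff)
    qed
  qed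
  show ?thesis using main[OF reach play cons inZ] eq by simp
qed

end


context actx
begin

lemma extract_tangle:
  assumes reach: "(tattr_step H T a A)\<^sup>*\<^sup>* (A, Map.empty) (Z, \<sigma>)"
    and t: "t \<in> extract_tangles H a Z \<sigma>"
  shows "is_tangle H t"
proof -
  obtain rk tg n where inv: "ainv H T a A Z \<sigma> rk tg n"
    using inv_reach[OF reach] by auto
  from inv have i: "Z \<subseteq> verts H" "dom \<sigma> \<subseteq> Z \<inter> Vp H a"
    "\<forall>v w. \<sigma> v = Some w \<longrightarrow> (v, w) \<in> E H \<and> w \<in> Z"
    unfolding ainv_def by auto
  define Y where "Y = greatest_closed H a Z \<sigma>"
  define EG where "EG = extract_graph H a Y \<sigma>"
  obtain C where C: "t = (C, \<sigma> |` (C \<inter> Vp H a))" "bottom_scc EG Y C"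
    "\<exists>u\<in>C. \<exists>w\<in>C. (u, w) \<in> EG"
    using t unfolding extract_tangles_def Y_def[symmetric] EG_def[symmetric] Let_def by blast
  have YZ: "Y \<subseteq> Z" unfolding Y_def greatest_closed_def by blast
  have Ycl: "\<forall>v\<in>Y \<inter> Vp H a. \<exists>w. \<sigma> v = Some w \<and> w \<in> Y"
  proof
    fix v assume v: "v \<in> Y \<inter> Vp H a"
    then obtain X where X: "X \<subseteq> Z" "closed_in H a \<sigma> X" "v \<in> X"
      unfolding Y_def greatest_closed_def by blast
    then obtain w where "\<sigma> v = Some w" "w \<in> X" using v unfolding closed_in_def by blast
    moreover have "X \<subseteq> Y" using X unfolding Y_def greatest_closed_def by blast
    ultimately show "\<exists>w. \<sigma> v = Some w \<and> w \<in> Y" by blast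
  qed
  have Cne: "C \<noteq> {}" and CY: "C \<subseteq> Y" and sc: "\<forall>u\<in>C. \<forall>w\<in>C. (u, w) \<in> EG\<^sup>*"
    and bot: "\<forall>u\<in>C. \<forall>w. (u, w) \<in> EG \<longrightarrow> w \<in> C"
    using C(2) unfolding bottom_scc_def by auto
  have CZ: "C \<subseteq> Z" using CY YZ by blast
  have finC: "finite C" using CZ i(1) fin by (meson finite_subset)
  have snone: "\<sigma> x = None" if "x \<notin> Vp H a" for x
    using that i(2) by (auto simp: dom_def subset_iff)
  have EGe: "(x, y) \<in> E H \<and> (\<forall>w. \<sigma> x = Some w \<longrightarrow> y = w)" if "(x, y) \<in> EG" for x y
  proof -
    have "(x \<in> Y \<inter> Vp H a \<and> \<sigma> x = Some y) \<or> ((x, y) \<in> E H \<and> x \<in> Y \<inter> Vp H (opp a))"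
      using that unfolding EG_def extract_graph_def by blast
    then show ?thesis
    proof
      assume h: "x \<in> Y \<inter> Vp H a \<and> \<sigma> x = Some y"
      then show ?thesis using i(3) by auto
    next
      assume h: "(x, y) \<in> E H \<and> x \<in> Y \<inter> Vp H (opp a)"
      then have "x \<notin> Vp H a" using Vp_opp_disj[OF alpha disj] by blast
      then show ?thesis using h snone by simp
    qed
  qed
  have "Max (pr H ` C) \<in> pr H ` C" using finC Cne by simp
  then obtain c where c: "c \<in> C" "pr H c = prmax H C" unfolding prmax_def by (metis imageE)
  obtain u w where uw: "u \<in> C" "w \<in> C" "(u, w) \<in> EG" using C(3) by blast
  have "(c, u) \<in> EG\<^sup>*" "(w, c) \<in> EG\<^sup>*" using sc c(1) uw by auto
  then have "(c, w) \<in> EG\<^sup>+" using uw(3) by (meson rtrancl_into_trancl1)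
  then have "(c, c) \<in> EG\<^sup>+" using \<open>(w, c) \<in> EG\<^sup>*\<close> by (meson trancl_rtrancl_trancl)
  then obtain m where m: "m > 0" "(c, c) \<in> EG ^^ m" using trancl_power by blast
  then obtain f where f: "f 0 = c" "f m = c" "\<forall>i<m. (f i, f (Suc i)) \<in> EG"
    using relpow_fun_conv by metis
  have fC: "f i \<in> C" if "i \<le> m" for i
    using that
  proof (induction i)
    case 0 then show ?case using f(1) c(1) by simp
  next
    case (Suc i)
    then have "f i \<in> C" "(f i, f (Suc i)) \<in> EG" using f(3) by auto
    then show ?case using bot by blast
  qed
  have "Max (pr H ` f ` {..<m}) mod 2 = a"
  proof (rule periodic_won[OF reach m(1)])
    show "f m = f 0" using f by simp
    show "\<forall>i<m. (f i, f (Suc i)) \<in> E H \<and> f i \<in> Z \<and> (\<forall>w. \<sigma> (f i) = Some w \<longrightarrow> f (Suc i) = w)"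
      using f(3) EGe fC CZ by (meson less_imp_le subsetD)
  qed
  moreover have "Max (pr H ` f ` {..<m}) = pr H c"
  proof (rule Max_eqI)
    show "finite (pr H ` f ` {..<m})" by simp
    fix y assume "y \<in> pr H ` f ` {..<m}"
    then obtain i where "i < m" "y = pr H (f i)" by blast
    then show "y \<le> pr H c" using fC[of i] c(2) finC unfolding prmax_def by simp
  next
    show "pr H c \<in> pr H ` f ` {..<m}" using m(1) f(1) by force
  qed
  ultimately have pC: "prmax H C mod 2 = a" using c(2) by simp
  define \<sigma>' where "\<sigma>' = \<sigma> |` (C \<inter> Vp H a)"
  define R where "R = tangle_graph H C \<sigma>'"
  have R_def': "R = {(u, w). u \<in> C \<inter> Vp H a \<and> \<sigma>' u = Some w}
       \<union> {(u, w). (u, w) \<in> E H \<and> u \<in> C \<inter> Vp H (opp a) \<and> w \<in> C}"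
    unfolding R_def tangle_graph_def Let_def pC by simp
  have sig': "\<sigma>' x = \<sigma> x" if "x \<in> C \<inter> Vp H a" for x
    using that by (simp add: \<sigma>'_def)
  have own: "\<exists>w. \<sigma>' u = Some w \<and> w \<in> C \<and> (u, w) \<in> E H" if "u \<in> C \<inter> Vp H a" for u
  proof -
    have uY: "u \<in> Y \<inter> Vp H a" using that CY by blast
    obtain w where w: "\<sigma> u = Some w" using bspec[OF Ycl uY] by blast
    then have "(u, w) \<in> EG" using that CY unfolding EG_def extract_graph_def by blast
    then have "w \<in> C" using bot that by blast
    then show ?thesis using w sig'[OF that] i(3) by auto
  qed
  have domeq: "dom \<sigma>' = C \<inter> Vp H a"
  proof
    show "dom \<sigma>' \<subseteq> C \<inter> Vp H a" unfolding \<sigma>'_def dom_restrict by blast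
    show "C \<inter> Vp H a \<subseteq> dom \<sigma>'" using own by blast
  qed
  have EGR: "(x, y) \<in> R" if "(x, y) \<in> EG" "x \<in> C" for x y
  proof -
    have yC: "y \<in> C" using bot that by blast
    have "(x \<in> Y \<inter> Vp H a \<and> \<sigma> x = Some y) \<or> ((x, y) \<in> E H \<and> x \<in> Y \<inter> Vp H (opp a))"
      using that unfolding EG_def extract_graph_def by blast
    then show ?thesis
    proof
      assume h: "x \<in> Y \<inter> Vp H a \<and> \<sigma> x = Some y"
      then show ?thesis using sig'[of x] that(2) unfolding R_def' by auto
    next
      assume h: "(x, y) \<in> E H \<and> x \<in> Y \<inter> Vp H (opp a)"
      then show ?thesis using that(2) yC unfolding R_def' by auto
    qed
  qed
  have reachR: "(x, y) \<in> R\<^sup>* \<and> y \<in> C" if "(x, y) \<in> EG\<^sup>*" "x \<in> C" for x y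
    using that(1)
  proof (induction rule: rtrancl_induct)
    case base then show ?case using that(2) by simp
  next
    case (step y z)
    then have "(y, z) \<in> R" "z \<in> C" using EGR bot by blast+
    then show ?case using step by (meson rtrancl.rtrancl_into_rtrancl)
  qed
  have strong: "\<forall>u\<in>C. \<forall>w\<in>C. (u, w) \<in> R\<^sup>*" using sc reachR by blast
  have Re: "(x, y) \<in> E H \<and> x \<in> C \<and> (\<forall>w. \<sigma> x = Some w \<longrightarrow> y = w)" if "(x, y) \<in> R" for x y
  proof -
    have "(x \<in> C \<inter> Vp H a \<and> \<sigma>' x = Some y) \<or> ((x, y) \<in> E H \<and> x \<in> C \<inter> Vp H (opp a) \<and> y \<in> C)"
      using that unfolding R_def' by blast
    then show ?thesis
    proof
      assume h: "x \<in> C \<inter> Vp H a \<and> \<sigma>' x = Some y"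
      then have "\<sigma> x = Some y" using sig'[of x] by simp
      then show ?thesis using h i(3) by auto
    next
      assume h: "(x, y) \<in> E H \<and> x \<in> C \<inter> Vp H (opp a) \<and> y \<in> C"
      then have "x \<notin> Vp H a" using Vp_opp_disj[OF alpha disj] by blast
      then show ?thesis using h snone by simp
    qed
  qed
  have cyc: "Max (pr H ` set xs) mod 2 = a" if xs: "is_cycle R xs" for xs
  proof -
    define k where "k = length xs"
    have k: "k > 0" using xs unfolding is_cycle_def k_def by simp
    define g where "g i = xs ! (i mod k)" for i
    have gs: "g ` {..<k} = set xs"
    proof -
      have "g ` {..<k} = (\<lambda>i. xs ! i) ` {..<k}" unfolding g_def by (rule image_cong) auto
      also have "\<dots> = set xs" unfolding k_def by (auto simp: set_conv_nth)
      finally show ?thesis .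
    qed
    have "Max (pr H ` g ` {..<k}) mod 2 = a"
    proof (rule periodic_won[OF reach k])
      show "g k = g 0" by (simp add: g_def)
      show "\<forall>i<k. (g i, g (Suc i)) \<in> E H \<and> g i \<in> Z \<and> (\<forall>w. \<sigma> (g i) = Some w \<longrightarrow> g (Suc i) = w)"
      proof (intro allI impI)
        fix i assume ik: "i < k"
        have "(xs ! i, xs ! (Suc i mod k)) \<in> R" using xs ik unfolding is_cycle_def k_def by blast
        moreover have "g i = xs ! i" "g (Suc i) = xs ! (Suc i mod k)" using ik by (simp_all add: g_def)
        ultimately have "(g i, g (Suc i)) \<in> R" by simp
        then show "(g i, g (Suc i)) \<in> E H \<and> g i \<in> Z \<and> (\<forall>w. \<sigma> (g i) = Some w \<longrightarrow> g (Suc i) = w)"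
          using Re CZ by blast
      qed
    qed
    then show ?thesis using gs by simp
  qed
  show ?thesis
    unfolding C(1) is_tangle_def Let_def fst_conv snd_conv \<sigma>'_def[symmetric] pC R_def[symmetric]
    using Cne CZ i(1) domeq own strong cyc by blast
qed

end

lemma subgame_simps:
  "verts (subgame G S) = verts G \<inter> S"
  "Vp (subgame G S) x = Vp G x \<inter> S"
  "E (subgame G S) = E G \<inter> (S \<times> S)"
  "pr (subgame G S) = pr G"
  "V0 (subgame G S) = V0 G \<inter> S"
  "V1 (subgame G S) = V1 G \<inter> S"
  by (auto simp: subgame_def verts_def Vp_def)

lemma prmax_subgame: "prmax (subgame G S) U = prmax G U"
  by (simp add: prmax_def subgame_simps)

lemma tangle_graph_subgame:
  assumes "U \<subseteq> S"
  shows "tangle_graph (subgame G S) U \<tau> = tangle_graph G U \<tau>"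
  using assms unfolding tangle_graph_def Let_def prmax_subgame subgame_simps by auto

lemma tangle_subgame:
  assumes "fst t \<subseteq> S"
  shows "is_tangle (subgame G S) t \<longleftrightarrow> is_tangle G t"
proof -
  obtain U \<tau> where t: "t = (U, \<tau>)" by (cases t)
  have US: "U \<subseteq> S" using assms t by simp
  have i1: "U \<inter> X \<inter> S = U \<inter> X" for X using US by blast
  have i2: "(\<forall>u \<in> U \<inter> X. \<exists>w. \<tau> u = Some w \<and> w \<in> U \<and> (u, w) \<in> E G \<inter> (S \<times> S)) \<longleftrightarrow>
            (\<forall>u \<in> U \<inter> X. \<exists>w. \<tau> u = Some w \<and> w \<in> U \<and> (u, w) \<in> E G)" for X
    using US by blast
  have i3: "U \<subseteq> verts G \<inter> S \<longleftrightarrow> U \<subseteq> verts G" using US by blast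
  show ?thesis
    unfolding t is_tangle_def Let_def fst_conv snd_conv tangle_graph_subgame[OF US] prmax_subgame
      subgame_simps Int_assoc[symmetric] by (simp only: i1 i2 i3)
qed

lemma actx_inst:
  assumes wf: "wf_game G" and tT: "\<forall>t\<in>T. is_tangle G t" and p: "p = prmax G (verts G - D)"
  shows "actx (cur_subgame G D) (cur_tangles G T D) (p mod 2) ((verts G - D) \<inter> {v. pr G v = p}) p"
proof -
  have finG: "finite (verts G)" and dG: "V0 G \<inter> V1 G = {}" using wf by (auto simp: wf_game_def)
  let ?S = "verts G - D"
  have vH: "verts (cur_subgame G D) = ?S" by (auto simp: cur_subgame_def subgame_simps)
  show ?thesis
  proof
    show "finite (verts (cur_subgame G D))" using finG vH by simp
    show "V0 (cur_subgame G D) \<inter> V1 (cur_subgame G D) = {}"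
      using dG by (auto simp: cur_subgame_def subgame_simps)
    show "\<forall>t\<in>cur_tangles G T D. is_tangle (cur_subgame G D) t"
      using tT tangle_subgame unfolding cur_tangles_def cur_subgame_def by blast
    show "p mod 2 < 2" by simp
    show "(verts G - D) \<inter> {v. pr G v = p} \<subseteq> verts (cur_subgame G D)" using vH by blast
    show "\<forall>v\<in>(verts G - D) \<inter> {v. pr G v = p}. pr (cur_subgame G D) v = p"
      by (simp add: cur_subgame_def subgame_simps)
    show "\<forall>v\<in>verts (cur_subgame G D). pr (cur_subgame G D) v \<le> p"
      using finG unfolding vH p prmax_def by (simp add: cur_subgame_def subgame_simps)
  qed simp
qed

lemma search_inv:
  assumes wf: "wf_game G" and t0: "\<forall>t \<in> T0. is_tangle G t"
    and r: "(search_step G)\<^sup>*\<^sup>* (T0, {}, {}) s"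
  shows "\<forall>t \<in> fst s \<union> snd (snd s). is_tangle G t"
  using r
proof (induction rule: rtranclp_induct)
  case base then show ?case using t0 by simp
next
  case (step y z)
  from step(2) show ?case
  proof cases
    case (inner D p T Z \<sigma> Y)
    have tT: "\<forall>t\<in>T. is_tangle G t" using step(3) inner(1) by simp
    interpret actx "cur_subgame G D" "cur_tangles G T D" "p mod 2" "(verts G - D) \<inter> {v. pr G v = p}" p
      by (rule actx_inst[OF wf tT inner(4)])
    have reach: "(tattr_step (cur_subgame G D) (cur_tangles G T D) (p mod 2)
        ((verts G - D) \<inter> {v. pr G v = p}))\<^sup>*\<^sup>* ((verts G - D) \<inter> {v. pr G v = p}, Map.empty) (Z, \<sigma>)"
      using inner(5) unfolding tattr_def by blast
    have "is_tangle G t" if "t \<in> extract_tangles (cur_subgame G D) (p mod 2) Z \<sigma>" for t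
    proof -
      have th: "is_tangle (cur_subgame G D) t" by (rule extract_tangle[OF reach that])
      then have "fst t \<subseteq> verts G - D"
        unfolding is_tangle_def Let_def cur_subgame_def subgame_simps by blast
      then show ?thesis using th tangle_subgame unfolding cur_subgame_def by blast
    qed
    then show ?thesis using step(3) inner(1,2) by auto
  next
    case (outer D T Y)
    then show ?thesis using step(3) by auto
  qed
qed

theorem lemma2:
  fixes G :: "'v game" and T0 T Y :: "'v tangle set" and D Z :: "'v set"
    and \<sigma> :: "'v \<rightharpoonup> 'v" and \<rho> :: "nat \<Rightarrow> 'v" and p :: nat
  assumes "wf_game G"
    and "\<forall>t \<in> T0. is_tangle G t"
    and "search_reachable G T0 (T, D, Y)"
    and "verts G - D \<noteq> {}"
    and "p = prmax G (verts G - D)"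
    and "tattr (cur_subgame G D) (cur_tangles G T D) (p mod 2)
           ((verts G - D) \<inter> {v. pr G v = p}) (Z, \<sigma>)"
    and "is_play (cur_subgame G D) \<rho>"
    and "consistent \<sigma> \<rho>"
    and "\<forall>i. \<rho> i \<in> Z"
  shows "play_won_by (cur_subgame G D) (p mod 2) \<rho>"
proof -
  have tT: "\<forall>t\<in>T. is_tangle G t"
    using search_inv[OF assms(1,2)] assms(3) unfolding search_reachable_def by fastforce
  interpret actx "cur_subgame G D" "cur_tangles G T D" "p mod 2" "(verts G - D) \<inter> {v. pr G v = p}" p
    by (rule actx_inst[OF assms(1) tT assms(5)])
  have reach: "(tattr_step (cur_subgame G D) (cur_tangles G T D) (p mod 2)
      ((verts G - D) \<inter> {v. pr G v = p}))\<^sup>*\<^sup>* ((verts G - D) \<inter> {v. pr G v = p}, Map.empty) (Z, \<sigma>)"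
    using assms(6) unfolding tattr_def by blast
  show ?thesis unfolding play_won_by_def using main[OF reach assms(7-9)] .
qed


end
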